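(* Let $M=\{(w,\mathbf{f}(w)):w\in\mathbb{D}\}$ be a minimal graph over the unit disc $\mathbb{D}\subset\mathbb{C}$ with $\mathbf{f}(0)=0$, and let $x=(x_1,x_2,x_3):\mathbb{D}\to M$ be a conformal harmonic parametrization with $x(0)=(0,0,0)$ such that $f=x_1+ix_2:\mathbb{D}\to\mathbb{D}$ is an orientation-preserving harmonic diffeomorphism, $f(0)=0$. Write $f=h+\overline{g}$ with $h,g$ holomorphic, $p=h'=f_z$, and let $q:\mathbb{D}\to\mathbb{D}$ be holomorphic with $q^2=g'/h'$. Assume the Gaussian curvature $\mathcal{K}$ of $M$ vanishes at $O=(0,0,0)$ (equivalently $q'(0)=0$). Then the limit $$\mathcal{K}''(O):=\lim_{w\to 0}\frac{\mathcal{K}(w)}{|w|^2+\langle\nabla\mathbf{f}(0),w\rangle^2}$$ exists and $$|\mathcal{K}''(O)|=\frac{4|q''(0)|^2}{|p(0)|^4\,(1+|q(0)|^2)^6}.$$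
   Context: $\mathcal{K}(w)$ denotes the Gaussian curvature of $M$ at $(w,\mathbf{f}(w))$, namely $\dfrac{\mathbf{f}_{uu}\mathbf{f}_{vv}-\mathbf{f}_{uv}^2}{(1+\mathbf{f}_u^2+\mathbf{f}_v^2)^2}$ with $w=u+iv$. In these Enneper–Weierstrass parameters, $\mathcal{K}(f(z))=-\dfrac{4|q'(z)|^2}{|p(z)|^2(1+|q(z)|^2)^4}$. $\langle\cdot,\cdot\rangle$ is the Euclidean inner product on $\mathbb{R}^2\cong\mathbb{C}$. *)

theory Defs
  imports "HOL-Complex_Analysis.Complex_Analysis"
begin

definition pdu :: "(complex \<Rightarrow> real) \<Rightarrow> complex \<Rightarrow> real" where
  "pdu F w = deriv (\<lambda>t::real. F (w + complex_of_real t)) 0"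

definition pdv :: "(complex \<Rightarrow> real) \<Rightarrow> complex \<Rightarrow> real" where
  "pdv F w = deriv (\<lambda>t::real. F (w + \<i> * complex_of_real t)) 0"

definition C2_on :: "(complex \<Rightarrow> real) \<Rightarrow> complex set \<Rightarrow> bool" where
  "C2_on F S \<longleftrightarrow> open S \<and>
     (\<forall>w\<in>S. F differentiable (at w) \<and> pdu F differentiable (at w) \<and> pdv F differentiable (at w)) \<and>
     continuous_on S (pdu (pdu F)) \<and> continuous_on S (pdv (pdu F)) \<and>
     continuous_on S (pdu (pdv F)) \<and> continuous_on S (pdv (pdv F))"

definition minimal_graph_on :: "(complex \<Rightarrow> real) \<Rightarrow> complex set \<Rightarrow> bool" where
  "minimal_graph_on F S \<longleftrightarrow> C2_on F S \<and>
     (\<forall>w\<in>S. (1 + (pdv F w)\<^sup>2) * pdu (pdu F) w - 2 * pdu F w * pdv F w * pdv (pdu F) w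
              + (1 + (pdu F w)\<^sup>2) * pdv (pdv F) w = 0)"

definition harmonic_on :: "(complex \<Rightarrow> real) \<Rightarrow> complex set \<Rightarrow> bool" where
  "harmonic_on F S \<longleftrightarrow> C2_on F S \<and> (\<forall>w\<in>S. pdu (pdu F) w + pdv (pdv F) w = 0)"

definition dz :: "(complex \<Rightarrow> real) \<Rightarrow> complex \<Rightarrow> complex" where
  "dz F w = (complex_of_real (pdu F w) - \<i> * complex_of_real (pdv F w)) / 2"

definition jac :: "(complex \<Rightarrow> real) \<Rightarrow> (complex \<Rightarrow> real) \<Rightarrow> complex \<Rightarrow> real" where
  "jac X1 X2 w = pdu X1 w * pdv X2 w - pdv X1 w * pdu X2 w"

definition gauss_curv :: "(complex \<Rightarrow> real) \<Rightarrow> complex \<Rightarrow> real" where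
  "gauss_curv F w = (pdu (pdu F) w * pdv (pdv F) w - (pdv (pdu F) w)\<^sup>2)
                     / (1 + (pdu F w)\<^sup>2 + (pdv F w)\<^sup>2)\<^sup>2"

definition grad :: "(complex \<Rightarrow> real) \<Rightarrow> complex \<Rightarrow> complex" where
  "grad F w = Complex (pdu F w) (pdv F w)"

end

theory Submission
  imports Defs
begin
lemma poly_N:
  fixes a b x y c d :: real
  shows "(((x*x-y*y)*d - 2*(x*y)*c - d) * (a - (a*(x*x-y*y) - b*(2*(x*y))))
          - ((x*x-y*y)*c + 2*(x*y)*d - c) * (b + (-(a*(2*(x*y))) - b*(x*x-y*y))))
       * ((-b - (b*(x*x-y*y) + a*(2*(x*y)))) * (c + ((x*x-y*y)*c + 2*(x*y)*d))
          - (a + (a*(x*x-y*y) - b*(2*(x*y)))) * (-d - ((x*x-y*y)*d - 2*(x*y)*c)))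
     - ((a + (a*(x*x-y*y) - b*(2*(x*y)))) * ((x*x-y*y)*c + 2*(x*y)*d - c)
        - (-b - (b*(x*x-y*y) + a*(2*(x*y)))) * ((x*x-y*y)*d - 2*(x*y)*c - d))^2
     = - (c*c+d*d) * (a*a+b*b) * (1-(x*x+y*y))^2 * (1+(x*x+y*y))^2"
  by algebra

lemma aux_div:
  fixes K C P2 n X :: real
  assumes "K * (P2*n*X)^2 = - 4 * C * P2 * n^2 * X^2 / (n*n)^2" "P2 > 0" "n > 0" "X > 0"
  shows "K = -4*C/(P2*n^4)"
proof -
  have h: "K * (P2 * (P2 * (X * (X * (n * (n * (n * n))))))) = - (C * (P2 * (X * (X * 4))))"
    using assms by (simp add: field_simps power2_eq_square)
  have "(K * (P2*n^4) + 4*C) * (P2*X*X) = 0"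
    using h by (simp add: algebra_simps power4_eq_xxxx)
  then have "K * (P2*n^4) + 4*C = 0" using assms by simp
  then show ?thesis using assms by (simp add: field_simps)
qed

lemma core_real:
  fixes a b x y c d s n uu uv vu vv A1 B1 A2 B2 e1 e2 f1 f2 :: real
  assumes s: "s * s = 1" and n: "n = 1 - (x*x+y*y)" "n > 0" and ab: "a*a+b*b > 0"
  and A1: "A1 = a + (a*(x*x-y*y) - b*(2*(x*y)))"
  and B1: "B1 = b + (-(a*(2*(x*y))) - b*(x*x-y*y))"
  and A2: "A2 = -b - (b*(x*x-y*y) + a*(2*(x*y)))"
  and B2: "B2 = a - (a*(x*x-y*y) - b*(2*(x*y)))"
  and e1: "e1 = (x*x-y*y)*d - 2*(x*y)*c - d"
  and e2: "e2 = (x*x-y*y)*c + 2*(x*y)*d - c"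
  and f1: "f1 = c + ((x*x-y*y)*c + 2*(x*y)*d)"
  and f2: "f2 = -d - ((x*x-y*y)*d - 2*(x*y)*c)"
  and q1: "A1 * uu + B1 * uv = s * e1 * 2 / (n*n)"
  and q2: "A2 * uu + B2 * uv = s * e2 * 2 / (n*n)"
  and q3: "- (A1 * vu) - B1 * vv = s * f1 * 2 / (n*n)"
  and q4: "- (A2 * vu) - B2 * vv = s * f2 * 2 / (n*n)"
  shows "uu * vv - uv^2 = -4*(c*c+d*d)/((a*a+b*b)*n^4)"
proof -
  define det where "det = A1*B2 - B1*A2"
  have det: "det = (a*a+b*b)*n*(1+(x*x+y*y))"
    unfolding det_def A1 B1 A2 B2 n by algebra
  have X: "1+(x*x+y*y) > 0"
  proof -
    have "x*x \<ge> 0" "y*y \<ge> 0" by simp_all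
    then show ?thesis by linarith
  qed
  have det0: "det \<noteq> 0" using ab n(2) X unfolding det by (metis mult_pos_pos less_irrefl)
  have nn: "n*n \<noteq> 0" using n by simp
  have uu: "uu * det = s*2*(e1*B2 - e2*B1)/(n*n)"
    using q1 q2 nn unfolding det_def by (simp add: field_simps) algebra
  have uv: "uv * det = s*2*(A1*e2 - A2*e1)/(n*n)"
    using q1 q2 nn unfolding det_def by (simp add: field_simps) algebra
  have vv: "vv * det = s*2*(A2*f1 - A1*f2)/(n*n)"
    using q3 q4 nn unfolding det_def by (simp add: field_simps) algebra
  have "(uu * vv - uv^2) * det^2 = (uu*det)*(vv * det) - (uv*det)^2"
    by (simp add: power2_eq_square algebra_simps)
  also have "\<dots> = (s * s)*4*((e1*B2 - e2*B1)*(A2*f1 - A1*f2) - (A1*e2 - A2*e1)^2)/(n*n)^2"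
    unfolding uu uv vv using nn by (simp add: power2_eq_square field_simps)
  also have "(e1*B2 - e2*B1)*(A2*f1 - A1*f2) - (A1*e2 - A2*e1)^2
      = - (c*c+d*d) * (a*a+b*b) * (1-(x*x+y*y))^2 * (1+(x*x+y*y))^2"
    unfolding A1 B1 A2 B2 e1 e2 f1 f2 by (rule poly_N)
  finally have "(uu * vv - uv^2) * det^2 = - 4 * (c*c+d*d) * (a*a+b*b) * n^2 * (1+(x*x+y*y))^2 / (n*n)^2"
    using s n by simp
  then show ?thesis using det n ab X aux_div by metis
qed

lemma core:
  fixes P Q D1 :: complex and s uu uv vu vv :: real
  assumes s: "s = 1 \<or> s = -1" and nq: "cmod Q < 1" and P: "P \<noteq> 0"
  and E: "\<And>k. k = 1 \<or> k = \<i> \<Longrightarrow>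
     (complex_of_real (Re (P*k + cnj (P*Q^2*k)) * uu + Im (P*k + cnj (P*Q^2*k)) * uv)
      - \<i> * complex_of_real (Re (P*k + cnj (P*Q^2*k)) * vu + Im (P*k + cnj (P*Q^2*k)) * vv)) / 2
     = s * (\<i>*(D1*k + Q^2*cnj(D1*k))/(1 - Q*cnj Q)^2)"
  shows "(uu * vv - uv^2) / (1 + (2*Re(s*(\<i>*Q/(1 - Q*cnj Q))))^2 + (-2*Im(s*(\<i>*Q/(1 - Q*cnj Q))))^2)^2
         = -4*(cmod D1)^2/((cmod P)^2*(1+(cmod Q)^2)^4)"
proof -
  obtain a b where Pab: "P = Complex a b" by (cases P)
  obtain x y where Qxy: "Q = Complex x y" by (cases Q)
  obtain c d where Dcd: "D1 = Complex c d" by (cases D1)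
  have QQ: "Q * cnj Q = complex_of_real (x*x+y*y)" unfolding Qxy by (simp add: complex_eq_iff)
  define n where "n = 1 - (x*x+y*y)"
  have cQ: "(cmod Q)^2 = x*x+y*y" unfolding Qxy cmod_power2 by (simp add: power2_eq_square)
  have cP: "(cmod P)^2 = a*a+b*b" unfolding Pab cmod_power2 by (simp add: power2_eq_square)
  have cD: "(cmod D1)^2 = c*c+d*d" unfolding Dcd cmod_power2 by (simp add: power2_eq_square)
  have "(cmod Q)^2 < 1" by (simp add: abs_square_less_1 nq)
  then have n0: "n > 0" unfolding n_def cQ[symmetric] by simp
  have ab: "a*a+b*b > 0" using P cP by (metis zero_less_norm_iff zero_less_power)
  have QQ': "1 - Q*cnj Q = complex_of_real n" unfolding QQ n_def by simp
  have den: "(1 - Q*cnj Q)^2 = complex_of_real (n*n)" unfolding QQ n_def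
    by (simp add: power2_eq_square)
  have EE: "((a + (a * (x * x - y * y) - b * (2 * (x * y)))) * uu +
      (b + (- (a * (2 * (x * y))) - b * (x * x - y * y))) * uv =
      s * ((x * x - y * y) * d - 2 * (x * y) * c - d) * 2 / (n * n) \<and>
      - ((a + (a * (x * x - y * y) - b * (2 * (x * y)))) * vu) -
      (b + (- (a * (2 * (x * y))) - b * (x * x - y * y))) * vv =
      s * (c + ((x * x - y * y) * c + 2 * (x * y) * d)) * 2 / (n * n)) \<and>
      ((- b - (b * (x * x - y * y) + a * (2 * (x * y)))) * uu +
      (a - (a * (x * x - y * y) - b * (2 * (x * y)))) * uv =
      s * ((x * x - y * y) * c + 2 * (x * y) * d - c) * 2 / (n * n) \<and>
      - ((- b - (b * (x * x - y * y) + a * (2 * (x * y)))) * vu) -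
      (a - (a * (x * x - y * y) - b * (2 * (x * y)))) * vv =
      s * (- d - ((x * x - y * y) * d - 2 * (x * y) * c)) * 2 / (n * n))"
    using E[of 1] E[of \<i>] unfolding den unfolding Pab Qxy Dcd
    by (simp add: complex_eq_iff power2_eq_square Re_divide_of_real Im_divide_of_real)
  have s2: "s * s = 1" using s by auto
  have K: "uu * vv - uv^2 = -4*(c*c+d*d)/((a*a+b*b)*n^4)"
    using EE by (intro core_real[OF s2 n_def n0 ab refl refl refl refl refl refl refl refl]) auto
  have B: "s*(\<i>*Q/(1 - Q*cnj Q)) = Complex (-s*y/n) (s*x/n)"
    unfolding QQ' unfolding Qxy by (simp add: complex_eq_iff Re_divide_of_real Im_divide_of_real)
  have D: "1 + (2*Re(s*(\<i>*Q/(1 - Q*cnj Q))))^2 + (-2*Im(s*(\<i>*Q/(1 - Q*cnj Q))))^2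
      = (1 + (x*x+y*y))^2/n^2"
  proof -
    have nn: "n^2 + 4*(x*x+y*y) = (1+(x*x+y*y))^2" unfolding n_def by algebra
    have "1 + (2*(-s*y/n))^2 + (-2*(s*x/n))^2 = (n^2 + 4*(s * s)*(x*x+y*y))/n^2"
      using n0 by (simp add: field_simps power2_eq_square)
    then show ?thesis unfolding B using s2 nn by simp
  qed
  have fin: "\<And>C P2 n X::real. n > 0 \<Longrightarrow> P2 > 0 \<Longrightarrow> X \<ge> 0 \<Longrightarrow>
      (-4*C/(P2*n^4)) / ((1+X)^2/n^2)^2 = -4*C/(P2*(1+X)^4)"
    by (simp add: field_simps power2_eq_square power4_eq_xxxx)
  have X0: "x*x+y*y \<ge> 0" by simp
  show ?thesis unfolding K D cQ cP cD using fin[OF n0 ab X0] .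
qed

lemma quad_id:
  fixes P Q z :: complex and s :: real
  assumes s: "s = 1 \<or> s = -1" and nq: "cmod Q < 1"
  shows "(cmod (P*z + cnj(P*Q^2*z)))^2 + ((2*Re (s*(\<i>*Q/(1 - Q*cnj Q)))) * Re (P*z + cnj(P*Q^2*z))
          + (-2*Im (s*(\<i>*Q/(1 - Q*cnj Q)))) * Im(P*z + cnj(P*Q^2*z)))^2
       = (cmod P)^2*(1+(cmod Q)^2)^2*(cmod z)^2"
proof -
  obtain a b where Pab: "P = Complex a b" by (cases P)
  obtain x y where Qxy: "Q = Complex x y" by (cases Q)
  obtain c d where Dcd: "z = Complex c d" by (cases z)
  have QQ: "Q * cnj Q = complex_of_real (x*x+y*y)" unfolding Qxy by (simp add: complex_eq_iff)
  define n where "n = 1 - (x*x+y*y)"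
  have cQ: "(cmod Q)^2 = x*x+y*y" unfolding Qxy cmod_power2 by (simp add: power2_eq_square)
  have cP: "(cmod P)^2 = a*a+b*b" unfolding Pab cmod_power2 by (simp add: power2_eq_square)
  have cD: "(cmod z)^2 = c*c+d*d" unfolding Dcd cmod_power2 by (simp add: power2_eq_square)
  have "(cmod Q)^2 < 1" by (simp add: abs_square_less_1 nq)
  then have n0: "n > 0" unfolding n_def cQ[symmetric] by simp
  have QQ': "1 - Q*cnj Q = complex_of_real n" unfolding QQ n_def by simp
  have B: "s*(\<i>*Q/(1 - Q*cnj Q)) = Complex (-s*y/n) (s*x/n)"
    unfolding QQ' unfolding Qxy by (simp add: complex_eq_iff Re_divide_of_real Im_divide_of_real)
  have s2: "s * s = 1" using s by auto
  obtain rr ii where V: "P*z + cnj(P*Q^2*z) = Complex rr ii" by (meson complex.exhaust_sel)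
  have rr: "rr = a*c - b*d + ((a*(x*x-y*y) - b*(2*x*y))*c - (a*(2*x*y) + b*(x*x-y*y))*d)"
    using arg_cong[OF V, of Re] unfolding Pab Qxy Dcd by (simp add: power2_eq_square algebra_simps)
  have ii: "ii = a*d + b*c - ((a*(x*x-y*y) - b*(2*x*y))*d + (a*(2*x*y) + b*(x*x-y*y))*c)"
    using arg_cong[OF V, of Im] unfolding Pab Qxy Dcd by (simp add: power2_eq_square algebra_simps)
  have cV: "(cmod (P*z + cnj(P*Q^2*z)))^2 = rr* rr+ii* ii" unfolding V cmod_power2 by (simp add: power2_eq_square)
  have key: "n^2*(rr* rr+ii* ii) + 4*(s * s)*(-y* rr - x* ii)^2 = n^2*(a*a+b*b)*(1+(x*x+y*y))^2*(c*c+d*d)"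
    unfolding rr ii n_def s2 by algebra
  have "(rr* rr+ii* ii) + (2*(-s*y/n)* rr + (-2*(s*x/n))* ii)^2 = (n^2*(rr* rr+ii* ii) + 4*(s * s)*(-y* rr - x* ii)^2)/n^2"
    using n0 by (simp add: field_simps power2_eq_square)
  also have "\<dots> = (a*a+b*b)*(1+(x*x+y*y))^2*(c*c+d*d)" unfolding key using n0 by simp
  finally show ?thesis unfolding cV unfolding V B cQ cP cD by simp
qed

lemma jac_id:
  fixes A G :: complex
  shows "Re (A*1 + cnj (G*1)) * Im (A*\<i> + cnj (G*\<i>)) - Re (A*\<i> + cnj (G*\<i>)) * Im (A*1 + cnj (G*1))
       = (cmod A)^2 - (cmod G)^2"
  unfolding cmod_power2 by (simp add: algebra_simps power2_eq_square)

lemma conf_id: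
  fixes A G :: complex
  shows "((complex_of_real (Re (A*1 + cnj (G*1))) - \<i> * complex_of_real (Re (A*\<i> + cnj (G*\<i>))))/2)^2
       + ((complex_of_real (Im (A*1 + cnj (G*1))) - \<i> * complex_of_real (Im (A*\<i> + cnj (G*\<i>))))/2)^2
       = A * G"
  by (simp add: complex_eq_iff power2_eq_square field_simps)

lemma x3_id:
  fixes A Q :: complex and a b :: real
  shows "(complex_of_real (Re (A*1 + cnj (A*Q^2*1)) * a + Im (A*1 + cnj (A*Q^2*1)) * b)
         - \<i> * complex_of_real (Re (A*\<i> + cnj (A*Q^2*\<i>)) * a + Im (A*\<i> + cnj (A*Q^2*\<i>)) * b))/2
       = A * ((complex_of_real a - \<i> * complex_of_real b)/2 + cnj ((complex_of_real a - \<i> * complex_of_real b)/2) * Q^2)"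
  by (simp add: complex_eq_iff power2_eq_square field_simps)

lemma sign_lemma:
  fixes A Q \<psi> :: complex
  assumes A: "A \<noteq> 0" and nq: "cmod Q < 1"
    and e: "(A * (\<psi> + cnj \<psi> * Q^2))^2 = - (A * (A * Q^2))"
  shows "\<psi> = \<i>*Q/(1 - Q*cnj Q) \<or> \<psi> = - (\<i>*Q/(1 - Q*cnj Q))"
proof -
  define u where "u = \<psi> + cnj \<psi> * Q^2"
  have "A^2 * u^2 = A^2 * (\<i>*Q)^2" using e unfolding u_def by (simp add: power2_eq_square algebra_simps)
  then have "u^2 = (\<i>*Q)^2" using A by simp
  then have u: "u = \<i>*Q \<or> u = -(\<i>*Q)" by (simp add: power2_eq_iff)
  have QQ: "Q * cnj Q = complex_of_real ((cmod Q)^2)" by (rule complex_norm_square[symmetric])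
  have "(cmod Q)^2 < 1" by (simp add: abs_square_less_1 nq)
  then have n0: "1 - Q * cnj Q \<noteq> 0" unfolding QQ
    by (metis of_real_1 of_real_diff of_real_eq_0_iff less_irrefl right_minus_eq)
  have "1 + (cmod Q)^2 > 0" by (simp add: add_pos_nonneg)
  then have n1: "1 + Q * cnj Q \<noteq> 0" unfolding QQ
    by (metis of_real_1 of_real_add of_real_eq_0_iff less_irrefl)
  have key: "\<psi> * ((1 - Q*cnj Q)*(1 + Q*cnj Q)) = u - cnj u * Q^2"
    unfolding u_def by (simp add: power2_eq_square algebra_simps)
  from u show ?thesis
  proof
    assume "u = \<i>*Q"
    then have "\<psi> * ((1 - Q*cnj Q)*(1 + Q*cnj Q)) = \<i>*Q*(1 + Q*cnj Q)"
      using key by (simp add: power2_eq_square algebra_simps)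
    then have "(\<psi> * (1 - Q*cnj Q) - \<i>*Q) * (1 + Q*cnj Q) = 0"
      by (simp add: algebra_simps)
    then have "\<psi> * (1 - Q*cnj Q) = \<i>*Q" using n1 by simp
    then show ?thesis using n0 by (simp add: field_simps)
  next
    assume "u = -(\<i>*Q)"
    then have "\<psi> * ((1 - Q*cnj Q)*(1 + Q*cnj Q)) = -(\<i>*Q*(1 + Q*cnj Q))"
      using key by (simp add: power2_eq_square algebra_simps)
    then have "(\<psi> * (1 - Q*cnj Q) + \<i>*Q) * (1 + Q*cnj Q) = 0"
      by (simp add: algebra_simps)
    then have "\<psi> * (1 - Q*cnj Q) = -(\<i>*Q)" using n1 by (simp add: eq_neg_iff_add_eq_0)
    then show ?thesis using n0 by (simp add: field_simps)
  qed
qed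


lemma lin_decomp:
  fixes D :: "complex \<Rightarrow> 'b::real_vector"
  assumes "linear D"
  shows "D k = Re k *\<^sub>R D 1 + Im k *\<^sub>R D \<i>"
proof -
  have "k = Re k *\<^sub>R 1 + Im k *\<^sub>R \<i>" by (simp add: complex_eq_iff)
  then have "D k = D (Re k *\<^sub>R 1 + Im k *\<^sub>R \<i>)" by simp
  also have "\<dots> = Re k *\<^sub>R D 1 + Im k *\<^sub>R D \<i>"
    using assms by (simp add: linear_add linear_scale)
  finally show ?thesis .
qed

lemma pd_eq:
  fixes F :: "complex \<Rightarrow> real"
  assumes d: "(F has_derivative D) (at w)"
  shows "pdu F w = D 1" "pdv F w = D \<i>"
proof -
  have lin: "linear D" using d has_derivative_linear by blast
  have A: "((\<lambda>t::real. F (w + complex_of_real t)) has_derivative (\<lambda>t. D (complex_of_real t))) (at 0)"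
  proof (rule has_derivative_compose[where f="\<lambda>t. w + complex_of_real t" and x=0, simplified])
    show "((\<lambda>t. w + complex_of_real t) has_derivative complex_of_real) (at 0)"
      by (auto intro!: derivative_eq_intros)
    show "(F has_derivative D) (at w)" by (rule d)
  qed
  have B: "(\<lambda>t. D (complex_of_real t)) = (\<lambda>t. t * D 1)"
  proof
    fix t have "complex_of_real t = t *\<^sub>R 1" by (simp add: scaleR_conv_of_real)
    then show "D (complex_of_real t) = t * D 1" using lin by (simp add: linear_scale)
  qed
  have "((\<lambda>t::real. F (w + complex_of_real t)) has_real_derivative D 1) (at 0)"
    using A unfolding B has_field_derivative_def by (metis (no_types, lifting) ext mult.commute)
  then show "pdu F w = D 1" unfolding pdu_def by (rule DERIV_imp_deriv)
  have A: "((\<lambda>t::real. F (w + \<i> * complex_of_real t)) has_derivative (\<lambda>t. D (\<i> * complex_of_real t))) (at 0)"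
  proof (rule has_derivative_compose[where f="\<lambda>t. w + \<i> * complex_of_real t" and x=0, simplified])
    show "((\<lambda>t. w + \<i> * complex_of_real t) has_derivative (\<lambda>t. \<i> * complex_of_real t)) (at 0)"
      by (auto intro!: derivative_eq_intros)
    show "(F has_derivative D) (at w)" by (rule d)
  qed
  have B: "(\<lambda>t. D (\<i> * complex_of_real t)) = (\<lambda>t. t * D \<i>)"
  proof
    fix t have "\<i> * complex_of_real t = t *\<^sub>R \<i>" by (simp add: scaleR_conv_of_real)
    then show "D (\<i> * complex_of_real t) = t * D \<i>" using lin by (simp add: linear_scale)
  qed
  have "((\<lambda>t::real. F (w + \<i> * complex_of_real t)) has_real_derivative D \<i>) (at 0)"
    using A unfolding B has_field_derivative_def by (metis (no_types, lifting) ext mult.commute)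
  then show "pdv F w = D \<i>" unfolding pdv_def by (rule DERIV_imp_deriv)
qed

lemma has_derivative_pd:
  fixes F :: "complex \<Rightarrow> real"
  assumes "F differentiable (at w)"
  shows "(F has_derivative (\<lambda>k. Re k * pdu F w + Im k * pdv F w)) (at w)"
proof -
  obtain D where d: "(F has_derivative D) (at w)" using assms differentiable_def by blast
  have lin: "linear D" using d has_derivative_linear by blast
  have "D = (\<lambda>k. Re k * pdu F w + Im k * pdv F w)"
  proof
    fix k show "D k = Re k * pdu F w + Im k * pdv F w"
      using lin_decomp[OF lin, of k] pd_eq[OF d] by simp
  qed
  then show ?thesis using d by simp
qed



lemma absL:
  fixes a X D :: real
  assumes "a > 0" "X > 0"
  shows "\<bar>(-4*D/(a^2*X^4))/(a^2*X^2)\<bar> = 4*\<bar>D\<bar>/(a^4*X^6)"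
  using assms by (simp add: abs_divide abs_mult field_simps power2_eq_square power4_eq_xxxx)
    (simp add: power_def)

theorem mainTheorem2:
  fixes F :: "complex \<Rightarrow> real"
    and f h g p q :: "complex \<Rightarrow> complex"
    and x3 :: "complex \<Rightarrow> real"
  assumes minimal: "minimal_graph_on F (ball 0 1)"
    and F0: "F 0 = 0"
    and hol_h: "h holomorphic_on ball 0 1"
    and hol_g: "g holomorphic_on ball 0 1"
    and f_decomp: "\<forall>z\<in>ball 0 1. f z = h z + cnj (g z)"
    and f_bij: "bij_betw f (ball 0 1) (ball 0 1)"
    and f_orient: "\<forall>z\<in>ball 0 1. jac (\<lambda>z. Re (f z)) (\<lambda>z. Im (f z)) z > 0"
    and f0: "f 0 = 0"
    and x3_graph: "\<forall>z\<in>ball 0 1. x3 z = F (f z)"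
    and x3_harm: "harmonic_on x3 (ball 0 1)"
    and conformal: "\<forall>z\<in>ball 0 1.
          (dz (\<lambda>z. Re (f z)) z)\<^sup>2 + (dz (\<lambda>z. Im (f z)) z)\<^sup>2 + (dz x3 z)\<^sup>2 = 0"
    and p_def: "\<forall>z\<in>ball 0 1. p z = deriv h z"
    and hol_q: "q holomorphic_on ball 0 1"
    and q_range: "q ` ball 0 1 \<subseteq> ball 0 1"
    and q_sq: "\<forall>z\<in>ball 0 1. (q z)\<^sup>2 = deriv g z / deriv h z"
    and K0: "gauss_curv F 0 = 0"
  shows "\<exists>L. ((\<lambda>w. gauss_curv F w / ((cmod w)\<^sup>2 + (inner (grad F 0) w)\<^sup>2)) \<longlongrightarrow> L) (at 0)
            \<and> \<bar>L\<bar> = 4 * (cmod (deriv (deriv q) 0))\<^sup>2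
                      / ((cmod (p 0))^4 * (1 + (cmod (q 0))\<^sup>2)^6)"
proof -
  define S where "S = ball (0::complex) 1"
  have oS: "open S" and S0: "0 \<in> S" unfolding S_def by auto
  have C2F: "C2_on F S" using minimal unfolding minimal_graph_on_def S_def by simp
  have C2x: "C2_on x3 S" using x3_harm unfolding harmonic_on_def S_def by simp
  have Fd: "F differentiable (at w)" "pdu F differentiable (at w)" "pdv F differentiable (at w)"
    if "w \<in> S" for w
    using C2F that unfolding C2_on_def by auto
  have fS: "f z \<in> S" if "z \<in> S" for z using f_bij that unfolding S_def bij_betw_def by auto
  define Df where "Df z k = deriv h z * k + cnj (deriv g z * k)" for z k
  have fD: "(f has_derivative Df z) (at z)" if z: "z \<in> S" for z
  proof -
    have z': "z \<in> ball 0 1" using z S_def by simp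
    have hd: "(h has_field_derivative deriv h z) (at z)"
      using holomorphic_derivI[OF hol_h open_ball z'] .
    have gd: "(g has_field_derivative deriv g z) (at z)"
      using holomorphic_derivI[OF hol_g open_ball z'] .
    have "((\<lambda>z. h z + cnj (g z)) has_derivative (\<lambda>k. deriv h z * k + cnj (deriv g z * k))) (at z)"
      using has_derivative_add[OF has_field_derivative_imp_has_derivative[OF hd]
          has_derivative_cnj[OF has_field_derivative_imp_has_derivative[OF gd]]] by simp
    then show ?thesis unfolding Df_def
      by (rule has_derivative_transform_within_open[OF _ oS z]) (use f_decomp S_def in auto)
  qed
  have FD: "(F has_derivative (\<lambda>k. Re k * pdu F w + Im k * pdv F w)) (at w)" if "w \<in> S" for w
    using has_derivative_pd Fd(1)[OF that] by blast
  have FuD: "(pdu F has_derivative (\<lambda>k. Re k * pdu (pdu F) w + Im k * pdv (pdu F) w)) (at w)"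
    if "w \<in> S" for w
    using has_derivative_pd Fd(2)[OF that] by blast
  have FvD: "(pdv F has_derivative (\<lambda>k. Re k * pdu (pdv F) w + Im k * pdv (pdv F) w)) (at w)"
    if "w \<in> S" for w
    using has_derivative_pd Fd(3)[OF that] by blast
  have x3D: "(x3 has_derivative (\<lambda>k. Re (Df z k) * pdu F (f z) + Im (Df z k) * pdv F (f z))) (at z)"
    if z: "z \<in> S" for z
  proof -
    have "((\<lambda>y. F (f y)) has_derivative (\<lambda>k. Re (Df z k) * pdu F (f z) + Im (Df z k) * pdv F (f z))) (at z)"
      using has_derivative_compose[OF fD[OF z] FD[OF fS[OF z]]] by simp
    then show ?thesis
      by (rule has_derivative_transform_within_open[OF _ oS z]) (use x3_graph S_def in auto)
  qed
  have ReD: "((\<lambda>y. Re (f y)) has_derivative (\<lambda>k. Re (Df z k))) (at z)" if "z \<in> S" for z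
    using has_derivative_Re[OF fD[OF that]] .
  have ImD: "((\<lambda>y. Im (f y)) has_derivative (\<lambda>k. Im (Df z k))) (at z)" if "z \<in> S" for z
    using has_derivative_Im[OF fD[OF that]] .
  define B where "B z = \<i> * q z / (1 - q z * cnj (q z))" for z
  have pw: "deriv h z \<noteq> 0 \<and> deriv g z = deriv h z * (q z)^2 \<and> cmod (q z) < 1 \<and>
            (dz F (f z) = B z \<or> dz F (f z) = - B z)" if z: "z \<in> S" for z
  proof -
    have z': "z \<in> ball 0 1" using z S_def by simp
    define A where "A = deriv h z"
    define G where "G = deriv g z"
    have "jac (\<lambda>z. Re (f z)) (\<lambda>z. Im (f z)) z = (cmod A)^2 - (cmod G)^2"
      unfolding jac_def pd_eq[OF ReD[OF z]] pd_eq[OF ImD[OF z]] Df_def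
      using jac_id[of A G] unfolding A_def G_def by simp
    moreover have "jac (\<lambda>z. Re (f z)) (\<lambda>z. Im (f z)) z > 0" using f_orient z' by blast
    ultimately have jg: "(cmod G)^2 < (cmod A)^2" by linarith
    then have A0: "A \<noteq> 0" by auto
    have GA: "G = A * (q z)^2" using q_sq z' A0 unfolding A_def G_def by simp
    have "q z \<in> ball 0 1" using q_range z' by blast
    then have nq: "cmod (q z) < 1" by simp
    define a where "a = pdu F (f z)"
    define b where "b = pdv F (f z)"
    have dzx3: "dz x3 z = A * (dz F (f z) + cnj (dz F (f z)) * (q z)^2)"
      unfolding dz_def pd_eq[OF x3D[OF z]] Df_def
      using x3_id[of A "q z" a b] unfolding a_def b_def A_def G_def[symmetric] GA by simp
    have "(dz (\<lambda>z. Re (f z)) z)\<^sup>2 + (dz (\<lambda>z. Im (f z)) z)\<^sup>2 = A * G"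
      unfolding dz_def pd_eq[OF ReD[OF z]] pd_eq[OF ImD[OF z]] Df_def
      using conf_id[of A G] unfolding A_def G_def by simp
    then have "(dz x3 z)^2 = - (A * (A * (q z)^2))" using conformal z' GA
      by (metis add_eq_0_iff)
    then have "dz F (f z) = B z \<or> dz F (f z) = - B z"
      unfolding B_def using sign_lemma[OF A0 nq] dzx3 by simp
    then show ?thesis using A0 GA nq unfolding A_def G_def by simp
  qed

  define DdzF where "DdzF w k = (complex_of_real (Re k * pdu (pdu F) w + Im k * pdv (pdu F) w)
       - \<i> * complex_of_real (Re k * pdu (pdv F) w + Im k * pdv (pdv F) w)) / 2" for w k
  have dzFD: "(dz F has_derivative DdzF w) (at w)" if "w \<in> S" for w
  proof -
    have e: "dz F = (\<lambda>w. (complex_of_real (pdu F w) - \<i> * complex_of_real (pdv F w)) / 2)"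
      by (rule ext) (simp add: dz_def)
    show ?thesis unfolding e DdzF_def
      by (auto intro!: derivative_eq_intros FuD[OF that] FvD[OF that])
  qed
  define Psi where "Psi y = dz F (f y)" for y
  have PsiD: "(Psi has_derivative (\<lambda>k. DdzF (f z) (Df z k))) (at z)" if "z \<in> S" for z
    unfolding Psi_def using has_derivative_compose[OF fD[OF that] dzFD[OF fS[OF that]]] .
  define DB where "DB z k = \<i>*(deriv q z*k + (q z)^2*cnj(deriv q z*k))/(1 - q z*cnj(q z))^2" for z k
  have nz: "1 - q z * cnj (q z) \<noteq> 0" if "z \<in> S" for z
  proof -
    have "(cmod (q z))^2 < 1" using pw[OF that] by (simp add: abs_square_less_1)
    then show ?thesis
      by (metis complex_norm_square of_real_1 of_real_diff of_real_eq_0_iff less_irrefl right_minus_eq)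
  qed
  have qd: "(q has_field_derivative deriv q z) (at z)" if "z \<in> S" for z
    using holomorphic_derivI[OF hol_q open_ball, of z] that S_def by simp
  have BD: "(B has_derivative DB z) (at z)" if z: "z \<in> S" for z
  proof -
    have q1: "(q has_derivative (\<lambda>k. deriv q z * k)) (at z)"
      using has_field_derivative_imp_has_derivative[OF qd[OF z]] .
    have d1: "((\<lambda>y. \<i> * q y) has_derivative (\<lambda>k. \<i> * (deriv q z * k))) (at z)"
      using has_derivative_mult_right[OF q1] .
    have d2: "((\<lambda>y. 1 - q y * cnj (q y)) has_derivative
         (\<lambda>k. 0 - (q z * cnj (deriv q z * k) + deriv q z * k * cnj (q z)))) (at z)"
      using has_derivative_diff[OF has_derivative_const has_derivative_mult[OF q1 has_derivative_cnj[OF q1]]] .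
    have "((\<lambda>y. \<i> * q y / (1 - q y * cnj (q y))) has_derivative
        (\<lambda>k. (\<i> * (deriv q z * k) * (1 - q z * cnj (q z)) - \<i> * q z * (0 - (q z * cnj (deriv q z * k) + deriv q z * k * cnj (q z))))
             / ((1 - q z * cnj (q z)) * (1 - q z * cnj (q z))))) (at z)"
      using has_derivative_divide'[OF d1 d2 nz[OF z]] .
    moreover have "(\<lambda>k. (\<i> * (deriv q z * k) * (1 - q z * cnj (q z)) - \<i> * q z * (0 - (q z * cnj (deriv q z * k) + deriv q z * k * cnj (q z))))
             / ((1 - q z * cnj (q z)) * (1 - q z * cnj (q z)))) = DB z"
      unfolding DB_def by (rule ext) (simp add: power2_eq_square algebra_simps)
    ultimately show ?thesis unfolding B_def by simp
  qed
  have sq: "Psi y * Psi y = B y * B y" if "y \<in> S" for y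
    using pw[OF that] unfolding Psi_def by auto
  have dd: "Psi z * DdzF (f z) (Df z k) = B z * DB z k" if z: "z \<in> S" for z k
  proof -
    have d1: "((\<lambda>y. Psi y * Psi y) has_derivative
        (\<lambda>k. Psi z * DdzF (f z) (Df z k) + DdzF (f z) (Df z k) * Psi z)) (at z)"
      using has_derivative_mult[OF PsiD[OF z] PsiD[OF z]] .
    have d1': "((\<lambda>y. B y * B y) has_derivative
        (\<lambda>k. Psi z * DdzF (f z) (Df z k) + DdzF (f z) (Df z k) * Psi z)) (at z)"
      by (rule has_derivative_transform_within_open[OF d1 oS z]) (use sq in auto)
    have d2: "((\<lambda>y. B y * B y) has_derivative (\<lambda>k. B z * DB z k + DB z k * B z)) (at z)"
      using has_derivative_mult[OF BD[OF z] BD[OF z]] .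
    have "(\<lambda>k. Psi z * DdzF (f z) (Df z k) + DdzF (f z) (Df z k) * Psi z) = (\<lambda>k. B z * DB z k + DB z k * B z)"
      using has_derivative_unique[OF d1' d2] .
    then have "Psi z * DdzF (f z) (Df z k) + DdzF (f z) (Df z k) * Psi z = B z * DB z k + DB z k * B z"
      by (metis (no_types, lifting))
    then show ?thesis by (simp add: mult.commute)
  qed

  define R where "R z = -4*(cmod (deriv q z))^2/((cmod (deriv h z))^2*(1+(cmod (q z))^2)^4)" for z
  have Kcore: "gauss_curv F (f z) = R z"
    if z: "z \<in> S" and s: "s = 1 \<or> s = -1" and ps: "Psi z = complex_of_real s * B z"
      and dk: "\<And>k. DdzF (f z) (Df z k) = complex_of_real s * DB z k" for z s
  proof -
    define P where "P = deriv h z"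
    define Q where "Q = q z"
    have P0: "P \<noteq> 0" and GA: "deriv g z = P * Q^2" and nq: "cmod Q < 1"
      using pw[OF z] unfolding P_def Q_def by auto
    have DfE: "Df z k = P*k + cnj (P*Q^2*k)" for k unfolding Df_def GA P_def by simp
    have E: "(complex_of_real (Re (P*k + cnj (P*Q^2*k)) * pdu (pdu F) (f z) + Im (P*k + cnj (P*Q^2*k)) * pdv (pdu F) (f z))
      - \<i> * complex_of_real (Re (P*k + cnj (P*Q^2*k)) * pdu (pdv F) (f z) + Im (P*k + cnj (P*Q^2*k)) * pdv (pdv F) (f z))) / 2
     = s * (\<i>*(deriv q z*k + Q^2*cnj(deriv q z*k))/(1 - Q*cnj Q)^2)" for k
      using dk[of k] unfolding DdzF_def DB_def DfE Q_def by simp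
    have c: "(pdu (pdu F) (f z) * pdv (pdv F) (f z) - (pdv (pdu F) (f z))^2) /
        (1 + (2*Re(s*(\<i>*Q/(1 - Q*cnj Q))))^2 + (-2*Im(s*(\<i>*Q/(1 - Q*cnj Q))))^2)^2
       = -4*(cmod (deriv q z))^2/((cmod P)^2*(1+(cmod Q)^2)^4)"
      by (rule core[OF s nq P0]) (use E in blast)
    have a: "pdu F (f z) = 2*Re(s*(\<i>*Q/(1 - Q*cnj Q)))" and b: "pdv F (f z) = -2*Im(s*(\<i>*Q/(1 - Q*cnj Q)))"
      using ps unfolding Psi_def B_def Q_def dz_def by (simp_all add: complex_eq_iff)
    show ?thesis using c unfolding gauss_curv_def a b R_def P_def Q_def by simp
  qed

  have KR1: "gauss_curv F (f z) = R z" if z: "z \<in> S" and qz: "q z \<noteq> 0" for z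
  proof -
    have B0: "B z \<noteq> 0" unfolding B_def using qz nz[OF z] by simp
    obtain s where s: "s = 1 \<or> s = -1" and ps: "Psi z = complex_of_real s * B z"
      using pw[OF z] unfolding Psi_def
      by (metis mult_1 mult_minus1 of_real_1 of_real_minus)
    have "DdzF (f z) (Df z k) = complex_of_real s * DB z k" for k
    proof -
      have "complex_of_real s * B z * DdzF (f z) (Df z k) = B z * DB z k" using dd[OF z, of k] ps by simp
      then have "B z * (complex_of_real s * DdzF (f z) (Df z k) - DB z k) = 0" by (simp add: algebra_simps)
      then have "complex_of_real s * DdzF (f z) (Df z k) = DB z k" using B0 by simp
      then have "complex_of_real s * (complex_of_real s * DdzF (f z) (Df z k)) = complex_of_real s * DB z k" by simp
      moreover have "complex_of_real s * complex_of_real s = 1" using s by auto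
      ultimately show ?thesis by (simp add: mult.assoc[symmetric])
    qed
    then show ?thesis using Kcore[OF z s ps] by blast
  qed
  have KR2: "gauss_curv F (f z) = R z" if z: "z \<in> S" and e: "e > 0" and qe: "\<forall>y\<in>ball z e. q y = 0" for z e
  proof -
    define U where "U = ball z e \<inter> S"
    have oU: "open U" and zU: "z \<in> U" unfolding U_def using oS z e by auto
    have Psi0: "Psi y = 0" if "y \<in> U" for y
    proof -
      have "B y = 0" using qe that unfolding U_def B_def by auto
      then show ?thesis using sq[of y] that unfolding U_def by auto
    qed
    have "(Psi has_derivative (\<lambda>k. 0)) (at z)"
      by (rule has_derivative_transform_within_open[OF has_derivative_const oU zU]) (use Psi0 in auto)
    then have D0: "(\<lambda>k. DdzF (f z) (Df z k)) = (\<lambda>k. 0)" using has_derivative_unique PsiD[OF z] by blast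
    have "(q has_field_derivative 0) (at z)"
      by (rule has_field_derivative_transform_within_open[OF DERIV_const oU zU]) (use qe U_def in auto)
    then have "deriv q z = 0" using qd[OF z] DERIV_unique by blast
    then have DB0: "DB z k = 0" for k unfolding DB_def by simp
    have "Psi z = complex_of_real 1 * B z" using Psi0[OF zU] qe e unfolding B_def by simp
    moreover have "DdzF (f z) (Df z k) = complex_of_real 1 * DB z k" for k
      using DB0 D0 by (metis mult_zero_right)
    ultimately show ?thesis using Kcore[OF z, of 1] by simp
  qed

  have contK: "isCont (\<lambda>y. gauss_curv F (f y)) z" if z: "z \<in> S" for z
  proof -
    have fc: "isCont f z" using fD[OF z] has_derivative_continuous by blast
    have w: "f z \<in> S" using fS[OF z] .
    have c1: "isCont (pdu (pdu F)) (f z)" "isCont (pdv (pdv F)) (f z)" "isCont (pdv (pdu F)) (f z)"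
      using C2F w oS unfolding C2_on_def by (auto simp: continuous_on_eq_continuous_at)
    have c2: "isCont (pdu F) (f z)" "isCont (pdv F) (f z)"
      using Fd(2,3)[OF w] by (auto intro: differentiable_imp_continuous_within)
    have ge: "(1 + (pdu F w)\<^sup>2 + (pdv F w)\<^sup>2)\<^sup>2 \<noteq> 0" for w
    proof -
      have "1 + (pdu F w)\<^sup>2 + (pdv F w)\<^sup>2 > 0" by (simp add: add_pos_nonneg)
      then show ?thesis by simp
    qed
    have "isCont (gauss_curv F) (f z)"
      unfolding gauss_curv_def[abs_def]
      by (intro continuous_intros c1 c2 ge)
    then show ?thesis using isCont_o2[OF fc] by blast
  qed
  have contR: "isCont R z" if z: "z \<in> S" for z
  proof -
    have hq: "deriv q holomorphic_on S" using holomorphic_deriv[OF hol_q] S_def by simp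
    have hh: "deriv h holomorphic_on S" using holomorphic_deriv[OF hol_h] S_def by simp
    have c1: "isCont (deriv q) z" using hq oS z
      by (meson continuous_on_eq_continuous_at holomorphic_on_imp_continuous_on)
    have c2: "isCont (deriv h) z" using hh oS z
      by (meson continuous_on_eq_continuous_at holomorphic_on_imp_continuous_on)
    have c3: "isCont q z" using hol_q oS z S_def
      by (meson continuous_on_eq_continuous_at holomorphic_on_imp_continuous_on)
    have ne: "(cmod (deriv h z))^2*(1+(cmod (q z))^2)^4 \<noteq> 0"
    proof -
      have "1+(cmod (q z))^2 > 0" by (simp add: add_pos_nonneg)
      then show ?thesis using pw[OF z] by simp
    qed
    show ?thesis unfolding R_def[abs_def]
      by (intro continuous_intros c1 c2 c3 ne)
  qed
  have KR: "gauss_curv F (f z) = R z" if z: "z \<in> S" for z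
  proof (cases "q z = 0")
    case False then show ?thesis using KR1[OF z] by blast
  next
    case qz: True
    show ?thesis
    proof (cases "\<exists>e>0. \<forall>y\<in>ball z e. q y = 0")
      case True then show ?thesis using KR2[OF z] by blast
    next
      case False
      define T where "T = {y \<in> S. q y \<noteq> 0}"
      have lim: "z islimpt T" unfolding islimpt_approachable
      proof (intro allI impI)
        fix e :: real assume e: "e > 0"
        obtain d where d: "d > 0" "ball z d \<subseteq> S" using oS z open_contains_ball by blast
        have "min e d > 0" using e d by simp
        then obtain y where y: "y \<in> ball z (min e d)" "q y \<noteq> 0" using False by blast
        have "y \<in> S" using y(1) d(2) by auto
        moreover have "y \<noteq> z" using y(2) qz by auto
        moreover have "dist y z < e" using y(1) by (simp add: dist_commute)
        ultimately show "\<exists>y\<in>T. y \<noteq> z \<and> dist y z < e" using y(2) unfolding T_def by blast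
      qed
      have nb: "at z within T \<noteq> bot" using lim trivial_limit_within by blast
      have t1: "((\<lambda>y. gauss_curv F (f y)) \<longlongrightarrow> gauss_curv F (f z)) (at z within T)"
        using contK[OF z] unfolding isCont_def by (rule tendsto_mono[OF at_le[OF subset_UNIV]])
      have t2: "(R \<longlongrightarrow> R z) (at z within T)"
        using contR[OF z] unfolding isCont_def by (rule tendsto_mono[OF at_le[OF subset_UNIV]])
      have ev: "eventually (\<lambda>y. gauss_curv F (f y) = R y) (at z within T)"
        unfolding eventually_at_filter by (rule always_eventually) (auto simp: T_def KR1)
      have t1': "(R \<longlongrightarrow> gauss_curv F (f z)) (at z within T)"
        using tendsto_cong[OF ev] t1 by blast
      show ?thesis using tendsto_unique[OF nb t1' t2] .
    qed
  qed

  have R00: "R 0 = 0" using KR[OF S0] f0 K0 by simp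
  have h0: "deriv h 0 \<noteq> 0" using pw[OF S0] by simp
  have pos0: "(cmod (deriv h 0))^2*(1+(cmod (q 0))^2)^4 > 0"
  proof -
    have "1+(cmod (q 0))^2 > 0" by (simp add: add_pos_nonneg)
    then show ?thesis using h0 by simp
  qed
  have X0: "1 + (cmod (q 0))\<^sup>2 \<noteq> 0" using pos0 by auto
  have dq0: "deriv q 0 = 0" using R00 h0 X0 unfolding R_def by simp
  define finv where "finv = inv_into S f"
  have fim: "f ` S = S" using f_bij unfolding S_def by (simp add: bij_betw_imp_surj_on)
  have injf: "inj_on f S" using f_bij unfolding S_def bij_betw_def by simp
  have contf: "continuous_on S f"
  proof (rule continuous_at_imp_continuous_on, rule ballI)
    fix z assume "z \<in> S" then show "isCont f z" using has_derivative_continuous[OF fD] by blast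
  qed
  have "continuous_on (f ` S) finv"
    by (rule continuous_on_inverse_open[OF oS contf]) (auto simp: finv_def injf)
  then have cfinv: "continuous_on S finv" unfolding fim .
  have finv0: "finv 0 = 0" unfolding finv_def using inv_into_f_f[OF injf S0] f0 by simp
  have ffinv: "f (finv w) = w" if "w \<in> S" for w unfolding finv_def using f_inv_into_f fim that by metis
  have finvS: "finv w \<in> S" if "w \<in> S" for w
    unfolding finv_def using inv_into_into fim that by metis
  have lfinv: "filterlim finv (at 0) (at 0)"
  proof -
    have "isCont finv 0" using cfinv oS S0 continuous_on_eq_continuous_at by blast
    then have t: "(finv \<longlongrightarrow> 0) (at 0)" using finv0 by (simp add: isCont_def)
    have "eventually (\<lambda>w. w \<in> S - {0}) (at 0)" using eventually_at_in_open[OF oS S0] .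
    then have "eventually (\<lambda>w. finv w \<in> UNIV \<and> finv w \<noteq> 0) (at 0)"
    proof eventually_elim
      case (elim w)
      have "finv w \<noteq> 0"
      proof
        assume "finv w = 0" then have "f (finv w) = 0" using f0 by simp
        then show False using ffinv elim by auto
      qed
      then show ?case by simp
    qed
    then show ?thesis using t by (simp add: filterlim_at)
  qed
  define g0 where "g0 = grad F 0"
  define Qf where "Qf z = (cmod (f z))\<^sup>2 + (inner g0 (f z))\<^sup>2" for z
  define c0 where "c0 = (cmod (deriv h 0))^2*(1+(cmod (q 0))^2)^2"
  define L0 where "L0 = (-4*(cmod (deriv (deriv q) 0))^2/((cmod (deriv h 0))^2*(1+(cmod (q 0))^2)^4)) / c0"
  have c0pos: "c0 > 0"
  proof -
    have "1+(cmod (q 0))^2 > 0" by (simp add: add_pos_nonneg)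
    then show ?thesis using h0 unfolding c0_def by simp
  qed
  have A1: "((\<lambda>z. R z / (cmod z)^2) \<longlongrightarrow> -4*(cmod (deriv (deriv q) 0))^2/((cmod (deriv h 0))^2*(1+(cmod (q 0))^2)^4)) (at 0)"
  proof -
    have hq': "deriv q holomorphic_on S" using holomorphic_deriv[OF hol_q] S_def by simp
    have d2: "(deriv q has_field_derivative deriv (deriv q) 0) (at 0)"
      using holomorphic_derivI[OF hq' oS S0] .
    have t1: "((\<lambda>z. deriv q z / z) \<longlongrightarrow> deriv (deriv q) 0) (at 0)"
      using d2 dq0 unfolding DERIV_def by simp
    have hh: "deriv h holomorphic_on S" using holomorphic_deriv[OF hol_h] S_def by simp
    have ch: "(deriv h \<longlongrightarrow> deriv h 0) (at 0)" using hh oS S0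
      by (meson continuous_on_eq_continuous_at holomorphic_on_imp_continuous_on isCont_def)
    have cq: "(q \<longlongrightarrow> q 0) (at 0)" using hol_q oS S0 S_def
      by (meson continuous_on_eq_continuous_at holomorphic_on_imp_continuous_on isCont_def)
    have t2: "((\<lambda>z. -4*(cmod (deriv q z / z))^2/((cmod (deriv h z))^2*(1+(cmod (q z))^2)^4))
        \<longlongrightarrow> -4*(cmod (deriv (deriv q) 0))^2/((cmod (deriv h 0))^2*(1+(cmod (q 0))^2)^4)) (at 0)"
      by (intro tendsto_intros t1 ch cq) (use h0 X0 in simp)
    moreover have "eventually (\<lambda>z. -4*(cmod (deriv q z / z))^2/((cmod (deriv h z))^2*(1+(cmod (q z))^2)^4)
        = R z / (cmod z)^2) (at 0)"
      unfolding eventually_at_filter by (rule always_eventually) (auto simp: R_def norm_divide power_divide)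
    ultimately show ?thesis by (rule Lim_transform_eventually)
  qed
  have A2: "((\<lambda>z. Qf z / (cmod z)^2) \<longlongrightarrow> c0) (at 0)"
  proof -
    define N where "N w = norm (w, inner g0 w)" for w :: complex
    have NQ: "(N w)^2 = (cmod w)^2 + (inner g0 w)^2" for w unfolding N_def norm_Pair by simp
    have Nge: "N w \<ge> 0" for w unfolding N_def by simp
    have Nle: "N w \<le> (1 + norm g0) * cmod w" for w
    proof -
      have "N w \<le> norm w + norm (inner g0 w)" unfolding N_def by (rule norm_Pair_le)
      also have "norm (inner g0 w) \<le> norm g0 * norm w" using Cauchy_Schwarz_ineq2[of g0 w] by simp
      finally show ?thesis by (simp add: algebra_simps)
    qed
    have Ndiff: "\<bar>N a - N b\<bar> \<le> N (a - b)" for a b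
    proof -
      have "(a, inner g0 a) - (b, inner g0 b) = (a - b, inner g0 (a - b))" by (simp add: inner_diff_right)
      then show ?thesis unfolding N_def using norm_triangle_ineq3[of "(a, inner g0 a)" "(b, inner g0 b)"] by simp
    qed
    define Df0 where "Df0 = Df 0"
    obtain s where s: "s = 1 \<or> s = -1" and ps: "dz F 0 = complex_of_real s * B 0"
      using pw[OF S0] f0 by (metis mult_1 mult_minus1 of_real_1 of_real_minus)
    have nq0: "cmod (q 0) < 1" and GA0: "deriv g 0 = deriv h 0 * (q 0)^2" using pw[OF S0] by auto
    have pu0: "pdu F 0 = 2*Re(s*(\<i>*q 0/(1 - q 0*cnj (q 0))))"
      and pv0: "pdv F 0 = -2*Im(s*(\<i>*q 0/(1 - q 0*cnj (q 0))))"
      using ps unfolding B_def dz_def by (simp_all add: complex_eq_iff)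
    have r: "N (Df0 z) = sqrt c0 * cmod z" for z
    proof -
      have Dz: "Df0 z = deriv h 0 * z + cnj (deriv h 0 * (q 0)^2 * z)" unfolding Df0_def Df_def GA0 by simp
      have "(N (Df0 z))^2 = c0 * (cmod z)^2"
        unfolding NQ Dz g0_def grad_def inner_complex_def c0_def
        using quad_id[OF s nq0, of "deriv h 0" z] unfolding pu0 pv0 by simp
      then have "N (Df0 z) = sqrt (c0 * (cmod z)^2)" using Nge by (metis real_sqrt_unique)
      then show ?thesis by (simp add: real_sqrt_mult)
    qed
    have fD0: "((\<lambda>z. norm (f z - Df0 z) / norm z) \<longlongrightarrow> 0) (at 0)"
      using fD[OF S0] f0 unfolding has_derivative_at Df0_def by simp
    have g: "((\<lambda>z. (1 + norm g0) * (norm (f z - Df0 z) / norm z)) \<longlongrightarrow> 0) (at 0)"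
      using tendsto_mult[OF tendsto_const fD0, of "1 + norm g0"] by simp
    have "((\<lambda>z. N (f z) / cmod z - sqrt c0) \<longlongrightarrow> 0) (at 0)"
    proof (rule Lim_null_comparison[OF _ g])
      show "eventually (\<lambda>z. norm (N (f z) / cmod z - sqrt c0) \<le> (1 + norm g0) * (norm (f z - Df0 z) / norm z)) (at 0)"
        unfolding eventually_at_filter
      proof (rule always_eventually, intro allI impI)
        fix z :: complex assume "z \<noteq> 0"
        then have nz: "cmod z > 0" by simp
        have "N (f z) / cmod z - sqrt c0 = (N (f z) - N (Df0 z)) / cmod z"
          using r[of z] nz by (simp add: field_simps)
        then have "norm (N (f z) / cmod z - sqrt c0) = \<bar>N (f z) - N (Df0 z)\<bar> / cmod z"
          using nz by (simp add: abs_divide)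
        also have "\<dots> \<le> N (f z - Df0 z) / cmod z" using Ndiff nz by (simp add: divide_right_mono)
        also have "\<dots> \<le> (1 + norm g0) * cmod (f z - Df0 z) / cmod z" using Nle nz by (simp add: divide_right_mono)
        finally show "norm (N (f z) / cmod z - sqrt c0) \<le> (1 + norm g0) * (norm (f z - Df0 z) / norm z)"
          by simp
      qed
    qed
    then have "((\<lambda>z. N (f z) / cmod z) \<longlongrightarrow> sqrt c0) (at 0)" by (rule LIM_zero_cancel)
    then have "((\<lambda>z. (N (f z) / cmod z)^2) \<longlongrightarrow> (sqrt c0)^2) (at 0)" by (rule tendsto_power)
    moreover have "(\<lambda>z. (N (f z) / cmod z)^2) = (\<lambda>z. Qf z / (cmod z)^2)"
      by (rule ext) (simp add: power_divide NQ Qf_def)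
    ultimately show ?thesis using c0pos by simp
  qed
  have A3: "((\<lambda>z. R z / Qf z) \<longlongrightarrow> L0) (at 0)"
  proof -
    have "((\<lambda>z. (R z / (cmod z)^2) / (Qf z / (cmod z)^2)) \<longlongrightarrow> L0) (at 0)"
      unfolding L0_def using tendsto_divide[OF A1 A2] c0pos by simp
    moreover have "eventually (\<lambda>z. (R z / (cmod z)^2) / (Qf z / (cmod z)^2) = R z / Qf z) (at 0)"
      unfolding eventually_at_filter by (rule always_eventually) auto
    ultimately show ?thesis by (rule Lim_transform_eventually)
  qed
  have A4: "((\<lambda>w. R (finv w) / Qf (finv w)) \<longlongrightarrow> L0) (at 0)"
    using filterlim_compose[OF A3 lfinv] .
  have ev: "eventually (\<lambda>w. R (finv w) / Qf (finv w) =
      gauss_curv F w / ((cmod w)\<^sup>2 + (inner (grad F 0) w)\<^sup>2)) (at 0)"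
    using eventually_at_in_open'[OF oS S0]
  proof eventually_elim
    case (elim w)
    have "gauss_curv F w = R (finv w)" using KR[OF finvS[OF elim]] ffinv[OF elim] by simp
    then show ?case unfolding Qf_def g0_def ffinv[OF elim] by simp
  qed
  have lim: "((\<lambda>w. gauss_curv F w / ((cmod w)\<^sup>2 + (inner (grad F 0) w)\<^sup>2)) \<longlongrightarrow> L0) (at 0)"
    using tendsto_cong[OF ev] A4 by blast
  have p0: "p 0 = deriv h 0" using p_def by simp
  have "\<bar>L0\<bar> = 4 * (cmod (deriv (deriv q) 0))\<^sup>2 / ((cmod (p 0))^4 * (1 + (cmod (q 0))\<^sup>2)^6)"
  proof -
    have X: "1+(cmod (q 0))^2 > 0" by (simp add: add_pos_nonneg)
    have a: "cmod (deriv h 0) > 0" using h0 by simp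
    show ?thesis unfolding L0_def c0_def p0 using absL[OF a X, of "(cmod (deriv (deriv q) 0))^2"] by simp
  qed
  then show ?thesis using lim by blast
qed
end
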